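(* Let $A\in\mathbb{C}^{n\times n}$, $f\in\mathbb{C}^n$, $z, z_0\in\mathbb{C}$, $\delta\in\mathbb{R}$ and an integer $q\ge 1$. Define the polynomial \[ \tilde{p}(\lambda) = \sum_{j=0}^{q}\frac{(-\mathrm{i}\delta(\lambda-z_0))^j}{j!}, \] and assume $\tilde p(z)\neq 0$. Given $y^{(0)}\in\mathbb{C}^n$, define iterates $y^{(m)}$ by \[ \begin{aligned} k_1 &= -\mathrm{i}\delta\left((A-z_0I)y^{(m)} - f\right),\\ k_j &= \frac{-\mathrm{i}\delta}{j}\left((A-z_0I)k_{j-1}-\frac{(-\mathrm{i}\delta(z-z_0))^{j-1}}{(j-1)!}f\right),\quad j=2,\dots,q,\\ y^{(m+1)} &= \frac{y^{(m)} + \sum_{j=1}^{q} k_j }{\tilde{p}(z)}. \end{aligned} \] Let $y\in\mathbb{C}^n$ satisfy $(A-zI)y=f$. Then $y$ is a fixed point of this iteration (i.e. $y^{(m)}=y$ implies $y^{(m+1)}=y$), and for every $m\ge 0$, \[ y^{(m)} - y = \left(\frac{\tilde{p}(A)}{\tilde{p}(z)}\right)^m \left(y^{(0)} - y\right), \] where $\tilde p(A) = \sum_{j=0}^{q}\frac{(-\mathrm{i}\delta(A-z_0I))^j}{j!}$. *)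

theory Defs
  imports "HOL-Analysis.Analysis"
begin

primrec matpow :: "complex^'n^'n \<Rightarrow> nat \<Rightarrow> complex^'n^'n" where
  "matpow M 0 = mat 1"
| "matpow M (Suc k) = M ** matpow M k"

definition cmat_scale :: "complex \<Rightarrow> complex^'n^'m \<Rightarrow> complex^'n^'m" where
  "cmat_scale c M = (\<chi> i j. c * M $ i $ j)"

definition ptil :: "real \<Rightarrow> complex \<Rightarrow> nat \<Rightarrow> complex \<Rightarrow> complex" where
  "ptil \<delta> z0 q w = (\<Sum>j=0..q. (- \<i> * complex_of_real \<delta> * (w - z0)) ^ j / of_nat (fact j))"

definition ptilM :: "real \<Rightarrow> complex \<Rightarrow> nat \<Rightarrow> complex^'n^'n \<Rightarrow> complex^'n^'n" where
  "ptilM \<delta> z0 q A = (\<Sum>j=0..q.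
      cmat_scale (1 / of_nat (fact j)) (matpow (cmat_scale (- \<i> * complex_of_real \<delta>) (A - cmat_scale z0 (mat 1))) j))"

text \<open>The stage vectors k_j (j \<ge> 1) computed from the current iterate ym;
  kvec ... 0 is an unused dummy value.\<close>
fun kvec :: "complex^'n^'n \<Rightarrow> complex^'n \<Rightarrow> complex \<Rightarrow> complex \<Rightarrow> real \<Rightarrow> complex^'n \<Rightarrow> nat \<Rightarrow> complex^'n" where
  "kvec A f z z0 \<delta> ym 0 = 0"
| "kvec A f z z0 \<delta> ym (Suc 0) =
     (- \<i> * complex_of_real \<delta>) *s ((A - cmat_scale z0 (mat 1)) *v ym - f)"
| "kvec A f z z0 \<delta> ym (Suc (Suc j)) =
     ((- \<i> * complex_of_real \<delta>) / of_nat (Suc (Suc j))) *s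
       ((A - cmat_scale z0 (mat 1)) *v kvec A f z z0 \<delta> ym (Suc j)
        - ((- \<i> * complex_of_real \<delta> * (z - z0)) ^ Suc j / of_nat (fact (Suc j))) *s f)"

definition iter_step :: "complex^'n^'n \<Rightarrow> complex^'n \<Rightarrow> complex \<Rightarrow> complex \<Rightarrow> real \<Rightarrow> nat \<Rightarrow> complex^'n \<Rightarrow> complex^'n" where
  "iter_step A f z z0 \<delta> q ym =
     (1 / ptil \<delta> z0 q z) *s (ym + (\<Sum>j=1..q. kvec A f z z0 \<delta> ym j))"

end

theory Submission
  imports Defs
begin

lemma cms_mv: "cmat_scale c M *v x = c *s (M *v x)"
  by (simp add: cmat_scale_def vec_eq_iff matrix_vector_mult_def sum_distrib_left mult.assoc)

lemma mv_smult: "(M::complex^'n^'m) *v (a *s x) = a *s (M *v x)"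
  by (auto simp: vec_eq_iff matrix_vector_mult_def sum_distrib_left mult_ac intro!: sum.cong)

lemma sum_mv: "(\<Sum>j\<in>S. M j) *v x = (\<Sum>j\<in>S. M j *v x)"
  by (induction S rule: infinite_finite_induct) (auto simp: matrix_vector_mult_add_rdistrib)

lemma kdiff:
  assumes "j \<ge> 1"
  shows "kvec A f z z0 \<delta> u j - kvec A f z z0 \<delta> v j
    = (1 / of_nat (fact j)) *s (matpow (cmat_scale (- \<i> * complex_of_real \<delta>) (A - cmat_scale z0 (mat 1))) j *v (u - v))"
  using assms
proof (induction j)
  case 0 then show ?case by simp
next
  case (Suc j)
  show ?case
  proof (cases j)
    case 0
    then show ?thesis
      by (simp add: cms_mv matrix_vector_mult_diff_distrib vector_ssub_ldistrib)
  next
    case (Suc i)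
    have IH: "kvec A f z z0 \<delta> u (Suc i) - kvec A f z z0 \<delta> v (Suc i)
    = (1 / of_nat (fact (Suc i))) *s (matpow (cmat_scale (- \<i> * complex_of_real \<delta>) (A - cmat_scale z0 (mat 1))) (Suc i) *v (u - v))"
      using Suc.IH Suc by simp
    define c where "c = - \<i> * complex_of_real \<delta>"
    define B where "B = A - cmat_scale z0 (mat 1)"
    define P where "P = matpow (cmat_scale c B) (Suc i)"
    define d where "d = kvec A f z z0 \<delta> u (Suc i) - kvec A f z z0 \<delta> v (Suc i)"
    have d: "d = (1 / of_nat (fact (Suc i))) *s (P *v (u - v))"
      using IH unfolding d_def P_def c_def B_def by simp
    have "kvec A f z z0 \<delta> u (Suc (Suc i)) - kvec A f z z0 \<delta> v (Suc (Suc i))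
       = (c / of_nat (Suc (Suc i))) *s (B *v d)"
      unfolding d_def c_def B_def
      by (simp add: vec_eq_iff matrix_vector_mult_diff_distrib field_simps)
    also have "\<dots> = (c / of_nat (Suc (Suc i)) * (1 / of_nat (fact (Suc i)))) *s (B *v (P *v (u - v)))"
      unfolding d by (simp add: vec_eq_iff matrix_vector_mult_def sum_distrib_left mult_ac)
    also have "\<dots> = (1 / of_nat (fact (Suc (Suc i)))) *s (matpow (cmat_scale c B) (Suc (Suc i)) *v (u - v))"
    proof -
      have e: "matpow (cmat_scale c B) (Suc (Suc i)) = cmat_scale c B ** P"
        unfolding P_def by (rule matpow.simps(2))
      have "matpow (cmat_scale c B) (Suc (Suc i)) *v (u - v) = c *s (B *v (P *v (u - v)))"
        unfolding e by (simp add: matrix_vector_mul_assoc[symmetric] cms_mv)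
      then show ?thesis by (simp add: vec_eq_iff field_simps)
    qed
    finally show ?thesis unfolding Suc c_def B_def .
  qed
qed

lemma kfix:
  assumes "j \<ge> 1" and hy: "(A - cmat_scale z (mat 1)) *v y = f"
  shows "kvec A f z z0 \<delta> y j = ((- \<i> * complex_of_real \<delta> * (z - z0)) ^ j / of_nat (fact j)) *s y"
  using assms(1)
proof (induction j)
  case 0 then show ?case by simp
next
  case (Suc j)
  define c where "c = - \<i> * complex_of_real \<delta>"
  have By: "(A - cmat_scale z0 (mat 1)) *v y = f + (z - z0) *s y"
  proof -
    have "A - cmat_scale z0 (mat 1) = (A - cmat_scale z (mat 1)) + cmat_scale (z - z0) (mat 1)"
      by (simp add: cmat_scale_def vec_eq_iff mat_def algebra_simps)
    then have "(A - cmat_scale z0 (mat 1)) *v y = (A - cmat_scale z (mat 1)) *v y + cmat_scale (z - z0) (mat 1) *v y"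
      by (simp only: matrix_vector_mult_add_rdistrib)
    then show ?thesis using hy by (simp add: cms_mv)
  qed
  show ?case
  proof (cases j)
    case 0
    have "kvec A f z z0 \<delta> y (Suc 0) = c *s (((A - cmat_scale z0 (mat 1)) *v y) - f)"
      by (simp add: c_def)
    also have "\<dots> = c *s ((z - z0) *s y)" unfolding By by simp
    finally show ?thesis using 0 by (simp add: vec_eq_iff c_def algebra_simps)
  next
    case (Suc i)
    have IH: "kvec A f z z0 \<delta> y (Suc i) = ((c * (z - z0)) ^ Suc i / of_nat (fact (Suc i))) *s y"
      using Suc.IH Suc unfolding c_def by simp
    have H: "(A - cmat_scale z0 (mat 1)) *v kvec A f z z0 \<delta> y (Suc i)
        = ((c * (z - z0)) ^ Suc i / of_nat (fact (Suc i))) *s (f + (z - z0) *s y)"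
      unfolding IH mv_smult By ..
    have "kvec A f z z0 \<delta> y (Suc (Suc i)) = (c / of_nat (Suc (Suc i))) *s
        (((c * (z - z0)) ^ Suc i / of_nat (fact (Suc i))) *s (f + (z - z0) *s y)
         - ((c * (z - z0)) ^ Suc i / of_nat (fact (Suc i))) *s f)"
      by (simp only: kvec.simps(3) H c_def)
    also have "\<dots> = (c / of_nat (Suc (Suc i))) *s
        (((c * (z - z0)) ^ Suc i / of_nat (fact (Suc i))) *s ((z - z0) *s y))"
      by (simp only: vector_add_ldistrib add_diff_cancel_left')
    also have "\<dots> = ((c / of_nat (Suc (Suc i))) * ((c * (z - z0)) ^ Suc i / of_nat (fact (Suc i))) * (z - z0)) *s y"
      by (simp only: vector_smult_assoc mult.assoc)
    also have "(c / of_nat (Suc (Suc i))) * ((c * (z - z0)) ^ Suc i / of_nat (fact (Suc i))) * (z - z0)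
       = (c * (z - z0)) ^ Suc (Suc i) / of_nat (fact (Suc (Suc i)))"
      by (simp add: field_simps)
    finally show ?thesis unfolding Suc c_def .
  qed
qed

lemma step_diff:
  assumes "q \<ge> 1"
  shows "iter_step A f z z0 \<delta> q u - iter_step A f z z0 \<delta> q v
    = cmat_scale (1 / ptil \<delta> z0 q z) (ptilM \<delta> z0 q A) *v (u - v)"
proof -
  define P where "P = cmat_scale (- \<i> * complex_of_real \<delta>) (A - cmat_scale z0 (mat 1))"
  have "ptilM \<delta> z0 q A *v (u - v) = (\<Sum>j=0..q. (1 / of_nat (fact j)) *s (matpow P j *v (u - v)))"
    unfolding ptilM_def P_def by (simp add: sum_mv cms_mv)
  also have "\<dots> = (u - v) + (\<Sum>j=Suc 0..q. (1 / of_nat (fact j)) *s (matpow P j *v (u - v)))"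
    by (simp add: sum.atLeast_Suc_atMost)
  also have "(\<Sum>j=Suc 0..q. (1 / of_nat (fact j)) *s (matpow P j *v (u - v)))
     = (\<Sum>j=1..q. kvec A f z z0 \<delta> u j - kvec A f z z0 \<delta> v j)"
    by (rule sum.cong) (auto simp: kdiff P_def)
  also have "\<dots> = (\<Sum>j=1..q. kvec A f z z0 \<delta> u j) - (\<Sum>j=1..q. kvec A f z z0 \<delta> v j)"
    by (simp add: sum_subtractf)
  finally have "ptilM \<delta> z0 q A *v (u - v) = (u + (\<Sum>j=1..q. kvec A f z z0 \<delta> u j)) - (v + (\<Sum>j=1..q. kvec A f z z0 \<delta> v j))"
    by simp
  then show ?thesis unfolding iter_step_def cms_mv
    by (simp add: vector_ssub_ldistrib)
qed

theorem theorem4p2: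
  fixes A :: "complex^'n^'n" and f y y0 :: "complex^'n"
    and z z0 :: complex and \<delta> :: real and q :: nat
  assumes "q \<ge> 1"
    and "ptil \<delta> z0 q z \<noteq> 0"
    and "(A - cmat_scale z (mat 1)) *v y = f"
  shows "iter_step A f z z0 \<delta> q y = y
    \<and> (\<forall>m. (iter_step A f z z0 \<delta> q ^^ m) y0 - y
            = matpow (cmat_scale (1 / ptil \<delta> z0 q z) (ptilM \<delta> z0 q A)) m *v (y0 - y))"
proof
  have "y + (\<Sum>j=1..q. kvec A f z z0 \<delta> y j)
     = y + (\<Sum>j=Suc 0..q. ((- \<i> * complex_of_real \<delta> * (z - z0)) ^ j / of_nat (fact j)) *s y)"
    using assms(3) by (simp add: kfix)
  also have "\<dots> = (\<Sum>j=0..q. ((- \<i> * complex_of_real \<delta> * (z - z0)) ^ j / of_nat (fact j)) *s y)"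
    by (simp add: sum.atLeast_Suc_atMost)
  also have "\<dots> = ptil \<delta> z0 q z *s y"
    unfolding ptil_def by (simp add: vec_eq_iff sum_distrib_right)
  finally show fp: "iter_step A f z z0 \<delta> q y = y"
    unfolding iter_step_def using assms(2) by simp
  show "\<forall>m. (iter_step A f z z0 \<delta> q ^^ m) y0 - y
            = matpow (cmat_scale (1 / ptil \<delta> z0 q z) (ptilM \<delta> z0 q A)) m *v (y0 - y)"
  proof
    fix m show "(iter_step A f z z0 \<delta> q ^^ m) y0 - y
            = matpow (cmat_scale (1 / ptil \<delta> z0 q z) (ptilM \<delta> z0 q A)) m *v (y0 - y)"
    proof (induction m)
      case 0 then show ?case by simp
    next
      case (Suc m)
      have "(iter_step A f z z0 \<delta> q ^^ Suc m) y0 - y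
         = iter_step A f z z0 \<delta> q ((iter_step A f z z0 \<delta> q ^^ m) y0) - iter_step A f z z0 \<delta> q y"
        using fp by simp
      also have "\<dots> = cmat_scale (1 / ptil \<delta> z0 q z) (ptilM \<delta> z0 q A) *v ((iter_step A f z z0 \<delta> q ^^ m) y0 - y)"
        by (rule step_diff[OF assms(1)])
      finally show ?case using Suc by (simp add: matrix_vector_mul_assoc)
    qed
  qed
qed

end
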